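(* Let $F:\mathbb{R}^d\to\mathbb{R}$ be strongly convex with convexity parameter $\tau>0$ and belong to $C^{1,1}(\mathbb{R}^d)$ with gradient-Lipschitz constant $L>0$, and let $\boldsymbol x^*$ be its global minimizer. Fix $M\ge1$ and $0<\sigma<1$, and let $C>0$ be a constant such that for every $\boldsymbol x\in\mathbb{R}^d$ and every unit vector $\boldsymbol\xi\in\mathbb{R}^d$, $$\big|\widetilde{\mathscr{D}}^M[G_\sigma(0\,|\,\boldsymbol x,\boldsymbol\xi)]-\mathscr{D}[G_\sigma(0\,|\,\boldsymbol x,\boldsymbol\xi)]\big|\le C\,\frac{M!\,\sqrt{\pi}}{2^M\,(2M)!}\,\sigma^{2M-1}.$$ Let $\boldsymbol x_0\in\mathbb{R}^d$ and define $\boldsymbol x_{t+1}=\boldsymbol x_t-\lambda\,\widetilde{\nabla}^M_{\sigma,\boldsymbol\Xi_t}[F](\boldsymbol x_t)$ for $t\ge0$, with $\lambda=1/(8L)$ and where each $\boldsymbol\Xi_t$ is an (arbitrary) orthonormal basis of $\mathbb{R}^d$. Then for every $t\ge0$, $$F(\boldsymbol x_t)-F(\boldsymbol x^* )\le\frac12 L\Big[\delta_\sigma+\Big(1-\frac{\tau}{16L}\Big)^t\big(\|\boldsymbol x_0-\boldsymbol x^*\|^2-\delta_\sigma\big)\Big],$$ where $$\delta_\sigma=\Big(\frac{128}{\tau^2}+\frac{16}{\tau L}\Big)L^2 d\,\sigma^2+\Big(\frac{8}{\tau^2}+\frac{1}{2\tau L}\Big)\frac{C^2(M!)^2\pi d}{4^M((2M)!)^2}\,\sigma^2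 .$$
   Context: $F\in C^{1,1}(\mathbb{R}^d)$ means there is $L>0$ with $\|\nabla F(\boldsymbol x+\boldsymbol\xi)-\nabla F(\boldsymbol x)\|\le L\|\boldsymbol\xi\|$ for all $\boldsymbol x,\boldsymbol\xi$; $\|\cdot\|$ is the Euclidean norm. $F$ is strongly convex with parameter $\tau>0$ if $F(\boldsymbol x+\boldsymbol\xi)\ge F(\boldsymbol x)+\langle\nabla F(\boldsymbol x),\boldsymbol\xi\rangle+\frac\tau2\|\boldsymbol\xi\|^2$ for all $\boldsymbol x,\boldsymbol\xi$. For $\boldsymbol x\in\mathbb{R}^d$ and a unit vector $\boldsymbol\xi$, set $G(y\,|\,\boldsymbol x,\boldsymbol\xi)=F(\boldsymbol x+y\boldsymbol\xi)$ for $y\in\mathbb{R}$, and $G_\sigma(y\,|\,\boldsymbol x,\boldsymbol\xi)=\mathbb{E}_{v\sim\mathcal N(0,1)}[G(y+\sigma v\,|\,\boldsymbol x,\boldsymbol\xi)]$. Its derivative at $0$ is $\mathscr{D}[G_\sigma(0\,|\,\boldsymbol x,\boldsymbol\xi)]=\frac1\sigma\mathbb{E}_{v\sim\mathcal N(0,1)}[G(\sigma v\,|\,\boldsymbol x,\boldsymbol\xi)\,v]$. The Gauss–Hermite estimator is $\widetilde{\mathscr{D}}^M[G_\sigma(0\,|\,\boldsymbol x,\boldsymbol\xi)]=\frac{1}{\sqrt\pi\,\sigma}\sum_{m=1}^M w_m F(\boldsymbol x+\sqrt2\sigma v_m\boldsymbol\xi)\sqrt2 v_m$, where $v_1,\ldots,v_M$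 are the roots of the $M$-th Hermite polynomial $H_M$ (physicists' convention, weight $e^{-v^2}$) and $w_m$ the corresponding Gauss–Hermite quadrature weights. For an orthonormal basis $\boldsymbol\Xi=(\boldsymbol\xi_1,\ldots,\boldsymbol\xi_d)$, the DGS estimator is $\widetilde{\nabla}^M_{\sigma,\boldsymbol\Xi}[F](\boldsymbol x)=\sum_{i=1}^d\widetilde{\mathscr{D}}^M[G_\sigma(0\,|\,\boldsymbol x,\boldsymbol\xi_i)]\,\boldsymbol\xi_i$. *)

theory Defs
  imports "HOL-Probability.Probability"
begin

text \<open>Physicists' Hermite polynomials (weight exp(-v^2)).\<close>
fun hermite :: "nat \<Rightarrow> real \<Rightarrow> real" where
  "hermite 0 x = 1"
| "hermite (Suc 0) x = 2 * x"
| "hermite (Suc (Suc n)) x = 2 * x * hermite (Suc n) x - 2 * real (Suc n) * hermite n x"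

definition gh_nodes :: "nat \<Rightarrow> real set" where
  "gh_nodes M = {v. hermite M v = 0}"

definition gh_weight :: "nat \<Rightarrow> real \<Rightarrow> real" where
  "gh_weight M v = (LINT x|lborel. (\<Prod>u\<in>gh_nodes M - {v}. (x - u) / (v - u)) * exp (- x\<^sup>2))"

text \<open>Derivative at 0 of the Gaussian-smoothed 1D restriction G_sigma(. | x, xi).\<close>
definition smoothed_dir_deriv :: "('a::euclidean_space \<Rightarrow> real) \<Rightarrow> real \<Rightarrow> 'a \<Rightarrow> 'a \<Rightarrow> real" where
  "smoothed_dir_deriv F \<sigma> x \<xi> =
     (1 / \<sigma>) * (LINT v|lborel. std_normal_density v * (F (x + (\<sigma> * v) *\<^sub>R \<xi>) * v))"

definition gh_dir_deriv :: "('a::euclidean_space \<Rightarrow> real) \<Rightarrow> nat \<Rightarrow> real \<Rightarrow> 'a \<Rightarrow> 'a \<Rightarrow> real" where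
  "gh_dir_deriv F M \<sigma> x \<xi> =
     (1 / (sqrt pi * \<sigma>)) *
       (\<Sum>v\<in>gh_nodes M. gh_weight M v * F (x + (sqrt 2 * \<sigma> * v) *\<^sub>R \<xi>) * (sqrt 2 * v))"

definition orthonormal_basis :: "(nat \<Rightarrow> 'a::euclidean_space) \<Rightarrow> bool" where
  "orthonormal_basis \<Xi> \<longleftrightarrow>
     (\<forall>i<DIM('a). \<forall>j<DIM('a). \<Xi> i \<bullet> \<Xi> j = (if i = j then 1 else 0))"

definition dgs_grad :: "('a::euclidean_space \<Rightarrow> real) \<Rightarrow> nat \<Rightarrow> real \<Rightarrow> (nat \<Rightarrow> 'a) \<Rightarrow> 'a \<Rightarrow> 'a" where
  "dgs_grad F M \<sigma> \<Xi> x = (\<Sum>i<DIM('a). gh_dir_deriv F M \<sigma> x (\<Xi> i) *\<^sub>R \<Xi> i)"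

end

theory Submission
  imports Defs
begin


lemma onb_expand:
  fixes \<Xi> :: "nat \<Rightarrow> 'a::euclidean_space"
  assumes "orthonormal_basis \<Xi>"
  shows "g = (\<Sum>i<DIM('a). (g \<bullet> \<Xi> i) *\<^sub>R \<Xi> i)"
proof -
  let ?S = "\<Xi> ` {..<DIM('a)}"
  have ij: "\<And>i j. i < DIM('a) \<Longrightarrow> j < DIM('a) \<Longrightarrow> \<Xi> i \<bullet> \<Xi> j = (if i = j then 1 else 0)"
    using assms unfolding orthonormal_basis_def by blast
  have inj: "inj_on \<Xi> {..<DIM('a)}"
    unfolding inj_on_def using ij by (metis lessThan_iff zero_neq_one)
  have card: "card ?S = DIM('a)" using inj by (simp add: card_image)
  have po: "pairwise orthogonal ?S"
    unfolding pairwise_def orthogonal_def using ij by auto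
  have n0: "0 \<notin> ?S" using ij by fastforce
  have ind: "independent ?S" by (rule pairwise_orthogonal_independent[OF po n0])
  have sp: "UNIV \<subseteq> span ?S"
    by (rule card_ge_dim_independent[OF _ ind]) (auto simp: card)
  define w where "w = g - (\<Sum>i<DIM('a). (g \<bullet> \<Xi> i) *\<^sub>R \<Xi> i)"
  have "\<And>j. j < DIM('a) \<Longrightarrow> w \<bullet> \<Xi> j = 0"
  proof -
    fix j assume j: "j < DIM('a)"
    have "(\<Sum>i<DIM('a). (g \<bullet> \<Xi> i) *\<^sub>R \<Xi> i) \<bullet> \<Xi> j = (\<Sum>i<DIM('a). (g \<bullet> \<Xi> i) * (\<Xi> i \<bullet> \<Xi> j))"
      by (simp add: inner_sum_left)
    also have "\<dots> = (\<Sum>i<DIM('a). if i = j then g \<bullet> \<Xi> j else 0)"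
      by (rule sum.cong) (auto simp: ij j)
    also have "\<dots> = g \<bullet> \<Xi> j" using j by simp
    finally show "w \<bullet> \<Xi> j = 0" unfolding w_def by (simp add: inner_diff_left)
  qed
  then have "\<And>y. y \<in> ?S \<Longrightarrow> orthogonal w y" unfolding orthogonal_def by auto
  then have "orthogonal w w" using orthogonal_to_span sp by blast
  then have "w = 0" by (simp add: orthogonal_def)
  then show ?thesis unfolding w_def by simp
qed

lemma onb_norm_sum:
  fixes \<Xi> :: "nat \<Rightarrow> 'a::euclidean_space"
  assumes "orthonormal_basis \<Xi>"
  shows "(norm (\<Sum>i<DIM('a). c i *\<^sub>R \<Xi> i))\<^sup>2 = (\<Sum>i<DIM('a). (c i)\<^sup>2)"
proof -
  have ij: "\<And>i j. i < DIM('a) \<Longrightarrow> j < DIM('a) \<Longrightarrow> \<Xi> i \<bullet> \<Xi> j = (if i = j then 1 else 0)"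
    using assms unfolding orthonormal_basis_def by blast
  have "(norm (\<Sum>i<DIM('a). c i *\<^sub>R \<Xi> i))\<^sup>2 = (\<Sum>i<DIM('a). c i *\<^sub>R \<Xi> i) \<bullet> (\<Sum>i<DIM('a). c i *\<^sub>R \<Xi> i)"
    by (simp add: power2_norm_eq_inner)
  also have "\<dots> = (\<Sum>i<DIM('a). \<Sum>j<DIM('a). c i * (c j * (\<Xi> j \<bullet> \<Xi> i)))"
    by (simp add: inner_sum_left inner_sum_right sum_distrib_left)
  also have "\<dots> = (\<Sum>i<DIM('a). \<Sum>j<DIM('a). if j = i then (c i)\<^sup>2 else 0)"
    by (intro sum.cong refl) (auto simp: ij power2_eq_square)
  also have "\<dots> = (\<Sum>i<DIM('a). (c i)\<^sup>2)" by simp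
  finally show ?thesis .
qed

lemma descent:
  fixes F :: "'a::euclidean_space \<Rightarrow> real"
  assumes grad: "\<And>y. (F has_derivative (\<lambda>h. gradF y \<bullet> h)) (at y)"
    and lipschitz: "\<And>y \<xi>. norm (gradF (y + \<xi>) - gradF y) \<le> L * norm \<xi>"
  shows "F (y + h) \<le> F y + gradF y \<bullet> h + L / 2 * (norm h)\<^sup>2"
proof -
  define \<phi> where "\<phi> s = F (y + s *\<^sub>R h) - s * (gradF y \<bullet> h) - L/2 * s\<^sup>2 * (norm h)\<^sup>2" for s :: real
  have D: "DERIV \<phi> s :> gradF (y + s *\<^sub>R h) \<bullet> h - gradF y \<bullet> h - L * s * (norm h)\<^sup>2" for s
  proof -
    have "((\<lambda>s. y + s *\<^sub>R h) has_derivative (\<lambda>t. t *\<^sub>R h)) (at s)"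
      by (auto intro!: derivative_eq_intros)
    from has_derivative_compose[OF this grad]
    have "((\<lambda>s. F (y + s *\<^sub>R h)) has_derivative (\<lambda>t. t * (gradF (y + s *\<^sub>R h) \<bullet> h))) (at s)"
      by (simp add: inner_scaleR_right)
    then have "((\<lambda>s. F (y + s *\<^sub>R h)) has_real_derivative (gradF (y + s *\<^sub>R h) \<bullet> h)) (at s)"
      by (simp add: has_field_derivative_def mult_commute_abs)
    then show ?thesis unfolding \<phi>_def
      by (auto intro!: derivative_eq_intros)
  qed
  have "\<phi> 1 \<le> \<phi> 0"
  proof (rule DERIV_nonpos_imp_nonincreasing[where f=\<phi>])
    fix s :: real assume s: "0 \<le> s" "s \<le> 1"
    have "gradF (y + s *\<^sub>R h) \<bullet> h - gradF y \<bullet> h = (gradF (y + s *\<^sub>R h) - gradF y) \<bullet> h"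
      by (simp add: inner_diff_left)
    also have "\<dots> \<le> norm (gradF (y + s *\<^sub>R h) - gradF y) * norm h"
      by (rule norm_cauchy_schwarz)
    also have "\<dots> \<le> L * norm (s *\<^sub>R h) * norm h"
      by (rule mult_right_mono[OF lipschitz]) simp
    also have "\<dots> = L * s * (norm h)\<^sup>2" using s by (simp add: power2_eq_square)
    finally show "\<exists>y. DERIV \<phi> s :> y \<and> y \<le> 0" using D by fastforce
  qed simp
  then show ?thesis unfolding \<phi>_def by simp
qed



lemma std_m1: "integral\<^sup>L lborel (\<lambda>x. std_normal_density x * x) = 0"
  using integral_std_normal_moment_odd[of 0] by simp
lemma std_m2: "integral\<^sup>L lborel (\<lambda>x. std_normal_density x * x\<^sup>2) = 1"
  using integral_std_normal_moment_even[of 1] by simp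
lemma std_m4: "integral\<^sup>L lborel (\<lambda>x. std_normal_density x * x ^ 4) = 3"
  using integral_std_normal_moment_even[of 2] by (simp add: fact_numeral)

lemma smoothed_close:
  fixes F :: "'a::euclidean_space \<Rightarrow> real"
  assumes grad: "\<And>y. (F has_derivative (\<lambda>h. gradF y \<bullet> h)) (at y)"
    and lipschitz: "\<And>y \<xi>. norm (gradF (y + \<xi>) - gradF y) \<le> L * norm \<xi>"
    and L: "L \<ge> 0"
    and sc: "\<And>y \<xi>. F (y + \<xi>) \<ge> F y + gradF y \<bullet> \<xi> + \<tau> / 2 * (norm \<xi>)\<^sup>2"
    and tau: "\<tau> \<ge> 0"
    and sig: "\<sigma> > 0"
    and xi: "norm \<xi> = 1"
  shows "\<bar>smoothed_dir_deriv F \<sigma> y \<xi> - gradF y \<bullet> \<xi>\<bar> \<le> L * \<sigma>"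
proof -
  define c where "c = gradF y \<bullet> \<xi>"
  define G where "G v = F (y + (\<sigma> * v) *\<^sub>R \<xi>)" for v
  define R where "R v = G v - F y - \<sigma> * v * c" for v
  define s where "s v = std_normal_density v" for v
  have Rb: "0 \<le> R v \<and> R v \<le> L/2 * \<sigma>\<^sup>2 * v\<^sup>2" for v
  proof -
    have e1: "gradF y \<bullet> ((\<sigma> * v) *\<^sub>R \<xi>) = \<sigma> * v * c" by (simp add: c_def)
    have e2: "(norm ((\<sigma> * v) *\<^sub>R \<xi>))\<^sup>2 = \<sigma>\<^sup>2 * v\<^sup>2" using xi by (simp add: power_mult_distrib)
    have "R v \<le> L/2 * \<sigma>\<^sup>2 * v\<^sup>2"
      using descent[OF grad lipschitz, of y "(\<sigma> * v) *\<^sub>R \<xi>", unfolded e1 e2] unfolding R_def G_def by simp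
    moreover have "0 \<le> R v"
    proof -
      have "0 \<le> \<tau> / 2 * (\<sigma>\<^sup>2 * v\<^sup>2)" using tau by simp
      then show ?thesis
        using sc[of y "(\<sigma> * v) *\<^sub>R \<xi>", unfolded e1 e2] unfolding R_def G_def by linarith
    qed
    ultimately show ?thesis by simp
  qed
  have contF: "continuous_on UNIV F"
    using grad has_derivative_continuous continuous_at_imp_continuous_on by blast
  have contG: "continuous_on UNIV G"
    unfolding G_def
    by (rule continuous_on_compose2[OF contF]) (auto intro!: continuous_intros)
  have contR: "continuous_on UNIV R"
    unfolding R_def by (intro continuous_intros contG)
  have meas: "(\<lambda>v. s v * (R v * v)) \<in> borel_measurable lborel"
  proof -
    have mR: "R \<in> borel_measurable lborel" using borel_measurable_continuous_onI[OF contR] by simp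
    have mI: "(\<lambda>x::real. x) \<in> borel_measurable lborel" using borel_measurable_continuous_onI[OF continuous_on_id'] by simp
    show ?thesis unfolding s_def by (intro borel_measurable_times mR mI) simp
  qed
  have i2: "integrable lborel (\<lambda>x. s x * x\<^sup>2)" unfolding s_def by (rule integrable_std_normal_moment)
  have i4: "integrable lborel (\<lambda>x. s x * x ^ 4)" unfolding s_def by (rule integrable_std_normal_moment)
  have i1: "integrable lborel (\<lambda>x. s x * x)"
    using integrable_std_normal_moment[of 1] unfolding s_def by simp
  define B where "B v = L/4 * \<sigma>\<^sup>2 * (s v * v\<^sup>2 + s v * v ^ 4)" for v
  have iB: "integrable lborel B" unfolding B_def using i2 i4 by auto
  have ptw: "\<bar>s v * (R v * v)\<bar> \<le> B v" for v
  proof -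
    have s0: "s v \<ge> 0" unfolding s_def by simp
    have sq: "v\<^sup>2 = \<bar>v\<bar>\<^sup>2" "v ^ 4 = \<bar>v\<bar> ^ 4" by simp_all
    have aux: "(a * (1 - a))\<^sup>2 = a\<^sup>2 + a ^ 4 - 2 * a ^ 3" for a :: real
      by (simp add: power2_eq_square power3_eq_cube power4_eq_xxxx algebra_simps)
    have cube: "2 * \<bar>v\<bar>^3 \<le> v\<^sup>2 + v ^ 4"
      using aux[of "\<bar>v\<bar>"] zero_le_power2[of "\<bar>v\<bar> * (1 - \<bar>v\<bar>)"] unfolding sq by linarith
    have c3: "v\<^sup>2 * \<bar>v\<bar> = \<bar>v\<bar> ^ 3"
      by (simp only: sq(1)) (simp add: power2_eq_square power3_eq_cube)
    have "\<bar>R v * v\<bar> \<le> L/2 * \<sigma>\<^sup>2 * v\<^sup>2 * \<bar>v\<bar>"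
      using mult_right_mono[OF conjunct2[OF Rb[of v]] abs_ge_zero[of v]] conjunct1[OF Rb[of v]] by (simp add: abs_mult)
    also have "\<dots> = L/4 * \<sigma>\<^sup>2 * (2 * \<bar>v\<bar>^3)"
      by (simp add: c3[symmetric])
    also have "\<dots> \<le> L/4 * \<sigma>\<^sup>2 * (v\<^sup>2 + v ^ 4)"
      using cube L by (intro mult_left_mono) auto
    finally have "\<bar>R v * v\<bar> \<le> L/4 * \<sigma>\<^sup>2 * (v\<^sup>2 + v ^ 4)" .
    then have "s v * \<bar>R v * v\<bar> \<le> s v * (L/4 * \<sigma>\<^sup>2 * (v\<^sup>2 + v ^ 4))"
      using s0 by (rule mult_left_mono)
    then show ?thesis unfolding B_def using s0 by (simp add: abs_mult algebra_simps)
  qed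
  have iR: "integrable lborel (\<lambda>v. s v * (R v * v))"
    by (rule Bochner_Integration.integrable_bound[OF iB meas]) (rule AE_I2, use ptw in \<open>simp add: order_trans[OF _ abs_ge_self]\<close>)
  have intB: "integral\<^sup>L lborel B = L * \<sigma>\<^sup>2"
    unfolding B_def using i2 i4 std_m2 std_m4 unfolding s_def by simp
  have IRb: "\<bar>integral\<^sup>L lborel (\<lambda>v. s v * (R v * v))\<bar> \<le> L * \<sigma>\<^sup>2"
  proof -
    have "integral\<^sup>L lborel (\<lambda>v. s v * (R v * v)) \<le> integral\<^sup>L lborel B"
      by (rule integral_mono[OF iR iB]) (use ptw abs_le_D1 in blast)
    moreover have "integral\<^sup>L lborel (\<lambda>v. - B v) \<le> integral\<^sup>L lborel (\<lambda>v. s v * (R v * v))"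
      by (rule integral_mono[OF _ iR]) (use ptw iB abs_le_D2 in \<open>auto intro: minus_le_iff[THEN iffD1]\<close>)
    ultimately show ?thesis using intB by simp
  qed
  have split: "(\<lambda>v. s v * (G v * v)) = (\<lambda>v. F y * (s v * v) + \<sigma> * c * (s v * v\<^sup>2) + s v * (R v * v))"
    by (rule ext) (simp add: R_def algebra_simps power2_eq_square)
  have "integral\<^sup>L lborel (\<lambda>v. s v * (G v * v)) = \<sigma> * c + integral\<^sup>L lborel (\<lambda>v. s v * (R v * v))"
  proof -
    have a1: "integrable lborel (\<lambda>v. F y * (s v * v))" using i1 by simp
    have a2: "integrable lborel (\<lambda>v. \<sigma> * c * (s v * v\<^sup>2))" using i2 by simp
    have m1: "integral\<^sup>L lborel (\<lambda>v. s v * v) = 0" using std_m1 unfolding s_def .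
    have m2: "integral\<^sup>L lborel (\<lambda>v. s v * v\<^sup>2) = 1" using std_m2 unfolding s_def .
    show ?thesis unfolding split
      by (simp add: Bochner_Integration.integral_add[OF Bochner_Integration.integrable_add[OF a1 a2] iR]
          Bochner_Integration.integral_add[OF a1 a2] m1 m2)
  qed
  moreover have "smoothed_dir_deriv F \<sigma> y \<xi> = (1/\<sigma>) * integral\<^sup>L lborel (\<lambda>v. s v * (G v * v))"
    unfolding smoothed_dir_deriv_def G_def s_def by simp
  ultimately have "smoothed_dir_deriv F \<sigma> y \<xi> = c + integral\<^sup>L lborel (\<lambda>v. s v * (R v * v)) / \<sigma>"
    using sig by (simp add: field_simps)
  then have "\<bar>smoothed_dir_deriv F \<sigma> y \<xi> - c\<bar> = \<bar>integral\<^sup>L lborel (\<lambda>v. s v * (R v * v))\<bar> / \<sigma>"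
    using sig by simp
  also have "\<dots> \<le> L * \<sigma>\<^sup>2 / \<sigma>" using IRb sig by (simp add: divide_right_mono)
  also have "\<dots> = L * \<sigma>" using sig by (simp add: power2_eq_square)
  finally show ?thesis unfolding c_def .
qed



lemma coef1:
  fixes L \<tau> :: real assumes "L > 0" "\<tau> > 0"
  shows "(1 / (4 * L * \<tau>) + 1 / (32 * L\<^sup>2)) * (3 * L\<^sup>2) \<le> \<tau> / (16 * L) * ((128 / \<tau>\<^sup>2 + 16 / (\<tau> * L)) * L\<^sup>2)"
  using assms by (simp add: field_simps power2_eq_square)

lemma coef2:
  fixes L \<tau> :: real assumes "L > 0" "\<tau> > 0" "\<tau> \<le> 8 * L"
  shows "(1 / (4 * L * \<tau>) + 1 / (32 * L\<^sup>2)) * (3/2) \<le> \<tau> / (16 * L) * (8 / \<tau>\<^sup>2 + 1 / (2 * \<tau> * L))"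
  using assms by (simp add: field_simps power2_eq_square)

lemma p4: "(2::real)^M * 2^M = 4^M" by (simp add: power_mult_distrib[symmetric])
lemma q1: "(fact M * sqrt pi / (2 ^ M * fact (2 * M)))\<^sup>2 = (fact M)\<^sup>2 * pi / (4 ^ M * (fact (2 * M))\<^sup>2 :: real)"
proof -
  have p4': "((2::real)^M)\<^sup>2 = 4^M" by (simp add: power2_eq_square p4)
  show ?thesis by (simp add: power_divide power_mult_distrib p4')
qed
lemma sig_pow: fixes \<sigma>::real assumes "0<\<sigma>" "\<sigma><1" "M \<ge> 1" shows "(\<sigma> ^ (2 * M - 1))\<^sup>2 \<le> \<sigma>\<^sup>2"
proof -
  have "(\<sigma> ^ (2 * M - 1))\<^sup>2 = \<sigma> ^ (2 * (2 * M - 1))" by (simp add: power_mult[symmetric] mult.commute)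
  also have "\<dots> \<le> \<sigma> ^ 2" using assms by (intro power_decreasing) auto
  finally show ?thesis .
qed

lemma lin_aux:
  fixes R N P G A T E Z W :: real
  shows "R = N - P + G \<Longrightarrow> A + T - E \<le> P \<Longrightarrow> G \<le> A / 4 + Z \<Longrightarrow> E \<le> T / 2 + W \<Longrightarrow> 0 \<le> A
    \<Longrightarrow> R \<le> N - T / 2 + W + Z"
  by linarith

theorem proposition2:
  fixes F :: "'a::euclidean_space \<Rightarrow> real"
    and gradF :: "'a \<Rightarrow> 'a"
    and \<tau> L \<sigma> C :: real
    and M :: nat
    and xstar :: "'a"
    and x :: "nat \<Rightarrow> 'a"
    and \<Xi> :: "nat \<Rightarrow> nat \<Rightarrow> 'a"
  assumes grad: "\<And>y. (F has_derivative (\<lambda>h. gradF y \<bullet> h)) (at y)"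
    and L_pos: "L > 0"
    and lipschitz: "\<And>y \<xi>. norm (gradF (y + \<xi>) - gradF y) \<le> L * norm \<xi>"
    and tau_pos: "\<tau> > 0"
    and strongly_convex:
      "\<And>y \<xi>. F (y + \<xi>) \<ge> F y + gradF y \<bullet> \<xi> + \<tau> / 2 * (norm \<xi>)\<^sup>2"
    and minimizer: "\<And>y. F xstar \<le> F y"
    and M_ge: "M \<ge> 1"
    and sigma: "0 < \<sigma>" "\<sigma> < 1"
    and C_pos: "C > 0"
    and quad_err: "\<And>y \<xi>. norm \<xi> = 1 \<Longrightarrow>
        \<bar>gh_dir_deriv F M \<sigma> y \<xi> - smoothed_dir_deriv F \<sigma> y \<xi>\<bar>
          \<le> C * (fact M * sqrt pi / (2 ^ M * fact (2 * M))) * \<sigma> ^ (2 * M - 1)"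
    and bases: "\<And>t. orthonormal_basis (\<Xi> t)"
    and iter: "\<And>t. x (Suc t) = x t - (1 / (8 * L)) *\<^sub>R dgs_grad F M \<sigma> (\<Xi> t) (x t)"
  shows "F (x t) - F xstar \<le>
    (let d = real DIM('a);
         \<delta> = (128 / \<tau>\<^sup>2 + 16 / (\<tau> * L)) * L\<^sup>2 * d * \<sigma>\<^sup>2
             + (8 / \<tau>\<^sup>2 + 1 / (2 * \<tau> * L))
               * (C\<^sup>2 * (fact M)\<^sup>2 * pi * d / (4 ^ M * (fact (2 * M))\<^sup>2)) * \<sigma>\<^sup>2
     in 1 / 2 * L * (\<delta> + (1 - \<tau> / (16 * L)) ^ t * ((norm (x 0 - xstar))\<^sup>2 - \<delta>)))"
proof -
  define d where "d = real DIM('a)"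
  define Bt where "Bt = C\<^sup>2 * (fact M)\<^sup>2 * pi * d / (4 ^ M * (fact (2 * M))\<^sup>2) * \<sigma>\<^sup>2"
  define \<delta> where "\<delta> = (128 / \<tau>\<^sup>2 + 16 / (\<tau> * L)) * L\<^sup>2 * d * \<sigma>\<^sup>2 + (8 / \<tau>\<^sup>2 + 1 / (2 * \<tau> * L)) * Bt"
  define \<rho> where "\<rho> = 1 - \<tau> / (16 * L)"
  define lam where "lam = 1 / (8 * L)"
  define Q where "Q = C * (fact M * sqrt pi / (2 ^ M * fact (2 * M))) * \<sigma> ^ (2 * M - 1)"
  define E where "E = d * (3 * L\<^sup>2 * \<sigma>\<^sup>2 + 3/2 * Q\<^sup>2)"
  define K where "K = 1 / (4 * L * \<tau>) + 1 / (32 * L\<^sup>2)"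
  have desc: "\<And>y h. F (y + h) \<le> F y + gradF y \<bullet> h + L / 2 * (norm h)\<^sup>2"
    by (rule descent[OF grad lipschitz])
  have gsq: "(norm (gradF y))\<^sup>2 \<le> 2 * L * (F y - F xstar)" for y
  proof -
    have "F xstar \<le> F (y + (- (1/L)) *\<^sub>R gradF y)" by (rule minimizer)
    also have "\<dots> \<le> F y + gradF y \<bullet> ((- (1/L)) *\<^sub>R gradF y) + L / 2 * (norm ((- (1/L)) *\<^sub>R gradF y))\<^sup>2"
      by (rule desc)
    also have "\<dots> = F y - (norm (gradF y))\<^sup>2 / (2 * L)"
      using L_pos by (simp add: power2_norm_eq_inner[symmetric] power_mult_distrib power2_eq_square field_simps)
    finally show ?thesis using L_pos by (simp add: field_simps)
  qed
  have g0: "gradF xstar = 0" using gsq[of xstar] by simp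
  have Fup: "F y - F xstar \<le> L / 2 * (norm (y - xstar))\<^sup>2" for y
    using desc[of xstar "y - xstar"] g0 by simp
  have tauL: "\<tau> \<le> L"
  proof -
    obtain b :: 'a where b: "b \<in> Basis" using nonempty_Basis by blast
    have nb: "norm b = 1" using b by simp
    have "F xstar + \<tau> / 2 \<le> F (xstar + b)" using strongly_convex[of xstar b] g0 nb by simp
    moreover have "F (xstar + b) \<le> F xstar + L / 2" using desc[of xstar b] g0 nb by simp
    ultimately show ?thesis by simp
  qed
  have err: "(norm (dgs_grad F M \<sigma> (\<Xi> t) (x t) - gradF (x t)))\<^sup>2 \<le> E" for t
  proof -
    let ?e = "\<lambda>i. gh_dir_deriv F M \<sigma> (x t) (\<Xi> t i) - gradF (x t) \<bullet> \<Xi> t i"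
    have ob: "orthonormal_basis (\<Xi> t)" by (rule bases)
    have "dgs_grad F M \<sigma> (\<Xi> t) (x t) - gradF (x t) = (\<Sum>i<DIM('a). ?e i *\<^sub>R \<Xi> t i)"
    proof -
      have ex: "gradF (x t) = (\<Sum>i<DIM('a). (gradF (x t) \<bullet> \<Xi> t i) *\<^sub>R \<Xi> t i)"
        by (rule onb_expand[OF ob])
      have "dgs_grad F M \<sigma> (\<Xi> t) (x t) - gradF (x t) = dgs_grad F M \<sigma> (\<Xi> t) (x t) - (\<Sum>i<DIM('a). (gradF (x t) \<bullet> \<Xi> t i) *\<^sub>R \<Xi> t i)"
        using ex by (rule arg_cong)
      then show ?thesis unfolding dgs_grad_def by (simp add: sum_subtractf scaleR_diff_left)
    qed
    then have "(norm (dgs_grad F M \<sigma> (\<Xi> t) (x t) - gradF (x t)))\<^sup>2 = (\<Sum>i<DIM('a). (?e i)\<^sup>2)"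
      using onb_norm_sum[OF ob] by simp
    also have "\<dots> \<le> (\<Sum>i<DIM('a). 3 * L\<^sup>2 * \<sigma>\<^sup>2 + 3/2 * Q\<^sup>2)"
    proof (rule sum_mono)
      fix i assume i: "i \<in> {..<DIM('a)}"
      have "\<Xi> t i \<bullet> \<Xi> t i = 1" using ob i unfolding orthonormal_basis_def by simp
      then have n1: "norm (\<Xi> t i) = 1" by (simp add: norm_eq_sqrt_inner)
      have a: "\<bar>gh_dir_deriv F M \<sigma> (x t) (\<Xi> t i) - smoothed_dir_deriv F \<sigma> (x t) (\<Xi> t i)\<bar> \<le> Q"
        unfolding Q_def by (rule quad_err[OF n1])
      have b: "\<bar>smoothed_dir_deriv F \<sigma> (x t) (\<Xi> t i) - gradF (x t) \<bullet> \<Xi> t i\<bar> \<le> L * \<sigma>"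
        by (rule smoothed_close[OF grad lipschitz _ strongly_convex _ sigma(1) n1]) (use L_pos tau_pos in auto)
      have ab: "\<bar>?e i\<bar> \<le> L * \<sigma> + Q" using a b by linarith
      have "(?e i)\<^sup>2 \<le> (L * \<sigma> + Q)\<^sup>2"
        using power_mono[OF ab abs_ge_zero, of 2] by simp
      also have "\<dots> \<le> 3 * L\<^sup>2 * \<sigma>\<^sup>2 + 3/2 * Q\<^sup>2"
      proof -
        have "0 \<le> (L * \<sigma> - Q / 2)\<^sup>2" by simp
        then show ?thesis by (simp add: power2_eq_square algebra_simps)
      qed
      finally show "(?e i)\<^sup>2 \<le> 3 * L\<^sup>2 * \<sigma>\<^sup>2 + 3/2 * Q\<^sup>2" .
    qed
    also have "\<dots> = E" unfolding E_def d_def by simp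
    finally show ?thesis .
  qed
  have Qsq: "d * Q\<^sup>2 \<le> Bt"
  proof -
    have "Q\<^sup>2 = C\<^sup>2 * ((fact M)\<^sup>2 * pi / (4 ^ M * (fact (2 * M))\<^sup>2)) * (\<sigma> ^ (2 * M - 1))\<^sup>2"
      unfolding Q_def by (simp only: power_mult_distrib q1)
    also have "\<dots> \<le> C\<^sup>2 * ((fact M)\<^sup>2 * pi / (4 ^ M * (fact (2 * M))\<^sup>2)) * \<sigma>\<^sup>2"
      by (intro mult_left_mono sig_pow sigma M_ge) auto
    finally have "d * Q\<^sup>2 \<le> d * (C\<^sup>2 * ((fact M)\<^sup>2 * pi / (4 ^ M * (fact (2 * M))\<^sup>2)) * \<sigma>\<^sup>2)"
      by (rule mult_left_mono) (simp add: d_def)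
    also have "\<dots> = Bt" unfolding Bt_def by (simp add: field_simps)
    finally show ?thesis .
  qed
  have KE: "K * E \<le> (1 - \<rho>) * \<delta>"
  proof -
    have d0: "d \<ge> 0" unfolding d_def by simp
    have c1: "K * (3 * L\<^sup>2) * (d * \<sigma>\<^sup>2) \<le> \<tau> / (16 * L) * ((128 / \<tau>\<^sup>2 + 16 / (\<tau> * L)) * L\<^sup>2) * (d * \<sigma>\<^sup>2)"
      unfolding K_def using coef1[OF L_pos tau_pos] d0 by (intro mult_right_mono) auto
    have c2: "K * (3/2) * (d * Q\<^sup>2) \<le> \<tau> / (16 * L) * (8 / \<tau>\<^sup>2 + 1 / (2 * \<tau> * L)) * Bt"
    proof -
      have "K * (3/2) * (d * Q\<^sup>2) \<le> K * (3/2) * Bt"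
        using Qsq L_pos tau_pos unfolding K_def by (intro mult_left_mono) auto
      also have "\<dots> \<le> \<tau> / (16 * L) * (8 / \<tau>\<^sup>2 + 1 / (2 * \<tau> * L)) * Bt"
      proof -
        have "0 \<le> d * Q\<^sup>2" using d0 by simp
        then have Bt0: "0 \<le> Bt" using Qsq by linarith
        have t8: "\<tau> \<le> 8 * L" using tauL L_pos by linarith
        show ?thesis unfolding K_def by (rule mult_right_mono[OF coef2[OF L_pos tau_pos t8] Bt0])
      qed
      finally show ?thesis .
    qed
    have "K * E = K * (3 * L\<^sup>2) * (d * \<sigma>\<^sup>2) + K * (3/2) * (d * Q\<^sup>2)"
      unfolding E_def by (simp add: algebra_simps)
    also have "\<dots> \<le> \<tau> / (16 * L) * ((128 / \<tau>\<^sup>2 + 16 / (\<tau> * L)) * L\<^sup>2) * (d * \<sigma>\<^sup>2) + \<tau> / (16 * L) * (8 / \<tau>\<^sup>2 + 1 / (2 * \<tau> * L)) * Bt"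
      using c1 c2 by linarith
    also have "\<dots> = \<tau> / (16 * L) * \<delta>" unfolding \<delta>_def by (simp add: distrib_left mult_ac)
    finally show ?thesis unfolding \<rho>_def by simp
  qed
  have step: "(norm (x (Suc t) - xstar))\<^sup>2 \<le> \<rho> * (norm (x t - xstar))\<^sup>2 + K * E" for t
  proof -
    define u where "u = x t - xstar"
    define g where "g = gradF (x t)"
    define gh where "gh = dgs_grad F M \<sigma> (\<Xi> t) (x t)"
    define e where "e = gh - g"
    define D where "D = F (x t) - F xstar"
    have D0: "D \<ge> 0" unfolding D_def using minimizer by simp
    have lam0: "lam > 0" unfolding lam_def using L_pos by simp
    have ne: "(norm e)\<^sup>2 \<le> E" unfolding e_def gh_def g_def by (rule err)
    have a: "(norm (x (Suc t) - xstar))\<^sup>2 = (norm u)\<^sup>2 - 2 * lam * (gh \<bullet> u) + lam\<^sup>2 * (norm gh)\<^sup>2"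
    proof -
      have eq: "x (Suc t) - xstar = u - lam *\<^sub>R gh" unfolding iter u_def gh_def lam_def by simp
      show ?thesis unfolding eq power2_norm_eq_inner
        by (simp add: inner_diff_left inner_diff_right inner_commute power2_eq_square algebra_simps)
    qed
    have b0: "g \<bullet> u \<ge> D + \<tau> / 2 * (norm u)\<^sup>2"
    proof -
      have "F (x t + - u) \<ge> F (x t) + g \<bullet> (- u) + \<tau> / 2 * (norm (- u))\<^sup>2"
        unfolding g_def by (rule strongly_convex)
      moreover have "x t + - u = xstar" unfolding u_def by simp
      moreover have "g \<bullet> (- u) = - (g \<bullet> u)" by simp
      moreover have "norm (- u) = norm u" by simp
      ultimately show ?thesis unfolding D_def by simp
    qed
    have eu: "e \<bullet> u \<ge> - (norm e * norm u)"
      using Cauchy_Schwarz_ineq2[of e u] by linarith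
    have ghu: "gh \<bullet> u = g \<bullet> u + e \<bullet> u" unfolding e_def by (simp add: inner_diff_left)
    have c: "2 * (norm e * norm u) \<le> \<tau> / 2 * (norm u)\<^sup>2 + 2 / \<tau> * (norm e)\<^sup>2"
    proof -
      have "0 \<le> (\<tau> / 2 * norm u - norm e)\<^sup>2" by simp
      then have "\<tau> * (norm e * norm u) \<le> (\<tau>/2)\<^sup>2 * (norm u)\<^sup>2 + (norm e)\<^sup>2"
        by (simp add: power2_eq_square algebra_simps)
      then have "2 * (norm e * norm u) \<le> (2/\<tau>) * ((\<tau>/2)\<^sup>2 * (norm u)\<^sup>2 + (norm e)\<^sup>2)"
        using tau_pos by (simp add: field_simps)
      then show ?thesis using tau_pos by (simp add: power2_eq_square field_simps)
    qed
    have d: "(norm gh)\<^sup>2 \<le> 2 * (norm g)\<^sup>2 + 2 * (norm e)\<^sup>2"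
    proof -
      have "gh = g + e" unfolding e_def by simp
      then have "norm gh \<le> norm g + norm e" using norm_triangle_ineq by simp
      then have "(norm gh)\<^sup>2 \<le> (norm g + norm e)\<^sup>2" by (simp add: power_mono)
      also have "\<dots> \<le> 2 * (norm g)\<^sup>2 + 2 * (norm e)\<^sup>2"
        using zero_le_power2[of "norm g - norm e"] by (simp add: power2_eq_square algebra_simps)
      finally show ?thesis .
    qed
    have gg: "(norm g)\<^sup>2 \<le> 2 * L * D" unfolding g_def D_def by (rule gsq)
    have P: "2 * lam * (gh \<bullet> u) \<ge> 2 * lam * (D + \<tau> / 2 * (norm u)\<^sup>2 - norm e * norm u)"
      using b0 eu ghu lam0 by (intro mult_left_mono) auto
    have c': "2 * lam * (norm e * norm u) \<le> lam * (\<tau> / 2 * (norm u)\<^sup>2 + 2 / \<tau> * (norm e)\<^sup>2)"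
      using mult_left_mono[OF c, of lam] lam0 by simp
    have d': "lam\<^sup>2 * (norm gh)\<^sup>2 \<le> lam\<^sup>2 * (2 * (2 * L * D) + 2 * (norm e)\<^sup>2)"
      using d gg by (intro mult_left_mono) auto
    have lamL: "lam\<^sup>2 * (2 * (2 * L * D)) = lam * D / 2"
      unfolding lam_def using L_pos by (simp add: power2_eq_square field_simps)
    have r: "(norm (x (Suc t) - xstar))\<^sup>2 \<le> (1 - lam * \<tau> / 2) * (norm u)\<^sup>2 + (2 * lam / \<tau> + 2 * lam\<^sup>2) * (norm e)\<^sup>2"
    proof -
      let ?nu = "(norm u)\<^sup>2" and ?ne = "(norm e)\<^sup>2" and ?p = "norm e * norm u"
      have P': "2 * lam * (gh \<bullet> u) \<ge> 2 * lam * D + lam * \<tau> * ?nu - 2 * lam * ?p"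
        using P by (simp add: algebra_simps)
      have d'': "lam\<^sup>2 * (norm gh)\<^sup>2 \<le> (2 * lam * D) / 4 + 2 * lam\<^sup>2 * ?ne"
      proof -
        have "lam\<^sup>2 * (2 * (2 * L * D) + 2 * ?ne) = lam\<^sup>2 * (2 * (2 * L * D)) + 2 * lam\<^sup>2 * ?ne"
          by (simp add: algebra_simps)
        moreover have "lam * D / 2 = (2 * lam * D) / 4" by simp
        ultimately show ?thesis using d' lamL by linarith
      qed
      have c'': "2 * lam * ?p \<le> (lam * \<tau> * ?nu) / 2 + 2 * lam / \<tau> * ?ne"
        using c' by (simp add: algebra_simps)
      have lD: "0 \<le> 2 * lam * D" using lam0 D0 by simp
      have "(norm (x (Suc t) - xstar))\<^sup>2 \<le> ?nu - (lam * \<tau> * ?nu) / 2 + 2 * lam / \<tau> * ?ne + 2 * lam\<^sup>2 * ?ne"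
        by (rule lin_aux[OF a P' d'' c'' lD])
      then show ?thesis by (simp add: algebra_simps)
    qed
    have k: "2 * lam / \<tau> + 2 * lam\<^sup>2 = K" "1 - lam * \<tau> / 2 = \<rho>"
      unfolding K_def lam_def \<rho>_def using L_pos tau_pos by (simp_all add: power2_eq_square field_simps)
    have K0: "K \<ge> 0" unfolding K_def using L_pos tau_pos by simp
    have "K * (norm e)\<^sup>2 \<le> K * E" using ne K0 by (rule mult_left_mono)
    then show ?thesis using r unfolding k u_def by linarith
  qed
  have rho0: "\<rho> \<ge> 0" unfolding \<rho>_def using tauL L_pos by (simp add: field_simps)
  have main: "(norm (x n - xstar))\<^sup>2 \<le> \<delta> + \<rho> ^ n * ((norm (x 0 - xstar))\<^sup>2 - \<delta>)" for n
  proof (induction n)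
    case 0 then show ?case by simp
  next
    case (Suc n)
    have "(norm (x (Suc n) - xstar))\<^sup>2 \<le> \<rho> * (norm (x n - xstar))\<^sup>2 + (1 - \<rho>) * \<delta>"
      using step[of n] KE by linarith
    also have "\<dots> \<le> \<rho> * (\<delta> + \<rho> ^ n * ((norm (x 0 - xstar))\<^sup>2 - \<delta>)) + (1 - \<rho>) * \<delta>"
      using Suc rho0 by (simp add: mult_left_mono)
    also have "\<dots> = \<delta> + \<rho> ^ Suc n * ((norm (x 0 - xstar))\<^sup>2 - \<delta>)"
      by (simp add: algebra_simps)
    finally show ?case .
  qed
  have "F (x t) - F xstar \<le> L / 2 * (norm (x t - xstar))\<^sup>2" by (rule Fup)
  also have "\<dots> \<le> L / 2 * (\<delta> + \<rho> ^ t * ((norm (x 0 - xstar))\<^sup>2 - \<delta>))"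
    using main[of t] L_pos by (simp add: mult_left_mono)
  finally show ?thesis unfolding Let_def d_def[symmetric] Bt_def[symmetric] \<delta>_def[symmetric] \<rho>_def[symmetric]
    by (simp add: Bt_def \<delta>_def mult.assoc)
qed

end
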